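(* Let $q$ be a prime power and let $\mathbf{G}\in\mathbb{F}_q^{k\times n}$ be a generator matrix of a linear $[n,k]_q$ code. Consider a coded storage system with files $f_1,\dots,f_k$ in which, for each $i\in[k]$, file $f_i$ has a given list $\mathcal{R}_i=(R_{i,1},\dots,R_{i,t_i})$ of $t_i\ge1$ recovery sets, each of size $1$ or $2$, and all servers have service rate $1$. Then: (i) if $\boldsymbol{x}^\star=(x^\star_{i,j}: i\in[k], j\in[t_i])$ is a maximum fractional matching in the graph representation of the code, the vector $\boldsymbol{\lambda}$ with $\lambda_i=\sum_{j=1}^{t_i}x^\star_{i,j}$ is a maximum demand vector in $\mathcal{S}(\mathbf{G})$; and (ii) for every maximum demand vector $\boldsymbol{\lambda}^\star\in\mathcal{S}(\mathbf{G})$ there exists a maximum fractional matching $\boldsymbol{x}^\star$ in the graph representation with $\lambda^\star_i=\sum_{j=1}^{t_i}x^\star_{i,j}$ for all $i\in[k]$.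
   Context: Let $\mathbf{g}_1,\dots,\mathbf{g}_n$ be the columns of $\mathbf{G}$ and $\mathbf{e}_i$ the $i$-th unit vector of $\mathbb{F}_q^k$. A set $R\subseteq[n]$ is a recovery set for file $f_i$ if there exist nonzero $\alpha_j\in\mathbb{F}_q$ ($j\in R$) with $\sum_{j\in R}\alpha_j\mathbf{g}_j=\mathbf{e}_i$. The service rate region $\mathcal{S}(\mathbf{G})$ is the set of $\boldsymbol{\lambda}\in\mathbb{R}^k$ for which there exist real $\lambda_{i,j}\ge0$ with $\sum_{j=1}^{t_i}\lambda_{i,j}=\lambda_i$ for all $i\in[k]$ and $\sum_{i=1}^k\sum_{j\in[t_i]:\,l\in R_{i,j}}\lambda_{i,j}\le1$ for every server $l\in[n]$. A maximum demand vector is a $\boldsymbol{\lambda}\in\mathcal{S}(\mathbf{G})$ maximizing $\sum_{i=1}^k\lambda_i$ over $\mathcal{S}(\mathbf{G})$. The graph representation is the (multi)graph with vertex set $[n]$ plus one new dummy vertex $d_{i,j}$ for each recovery set $R_{i,j}$ of size 1, and edges indexed by $(i,j)$: if $R_{i,j}=\{a,b\}$ the edge joins $a$ and $b$; if $R_{i,j}=\{r\}$ it joins $r$ and $d_{i,j}$. A fractional matching assigns $x_e\in[0,1]$ to edges so that at each vertex the sum over incident edges is at most 1; a maximum fractional matching maximizes $\sum_e x_e$. *)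

theory Defs
  imports Complex_Main
begin

text \<open>Conventions: indices are 0-based. Files are indexed by i < k, servers by l < n,
  recovery sets of file i by j < t i. The generator matrix G :: nat => nat => 'a is
  given by its entries G r c (row r < k, column c < n); the column g_c is
  (G 0 c, ..., G (k-1) c).\<close>

definition generator_matrix :: "nat \<Rightarrow> nat \<Rightarrow> (nat \<Rightarrow> nat \<Rightarrow> 'a::field) \<Rightarrow> bool" where
  "generator_matrix k n G \<longleftrightarrow>
     (\<forall>c::nat \<Rightarrow> 'a. (\<forall>l<n. (\<Sum>r<k. c r * G r l) = 0) \<longrightarrow> (\<forall>r<k. c r = 0))"

definition is_recovery_set ::
  "nat \<Rightarrow> nat \<Rightarrow> (nat \<Rightarrow> nat \<Rightarrow> 'a::field) \<Rightarrow> nat \<Rightarrow> nat set \<Rightarrow> bool" where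
  "is_recovery_set k n G i R \<longleftrightarrow> R \<subseteq> {..<n} \<and>
     (\<exists>\<alpha>::nat \<Rightarrow> 'a. (\<forall>j\<in>R. \<alpha> j \<noteq> 0) \<and>
        (\<forall>r<k. (\<Sum>j\<in>R. \<alpha> j * G r j) = (if r = i then 1 else 0)))"

definition rec_idx :: "nat \<Rightarrow> (nat \<Rightarrow> nat) \<Rightarrow> (nat \<times> nat) set" where
  "rec_idx k t = {(i, j). i < k \<and> j < t i}"

definition service_rate_region ::
  "nat \<Rightarrow> nat \<Rightarrow> (nat \<Rightarrow> nat) \<Rightarrow> (nat \<Rightarrow> nat \<Rightarrow> nat set) \<Rightarrow> (nat \<Rightarrow> real) set" where
  "service_rate_region k n t R = {dem. \<exists>lam :: nat \<Rightarrow> nat \<Rightarrow> real.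
       (\<forall>(i, j)\<in>rec_idx k t. lam i j \<ge> 0) \<and>
       (\<forall>i<k. (\<Sum>j<t i. lam i j) = dem i) \<and>
       (\<forall>l<n. (\<Sum>(i, j)\<in>{(i, j)\<in>rec_idx k t. l \<in> R i j}. lam i j) \<le> 1)}"

definition max_demand_vector ::
  "nat \<Rightarrow> nat \<Rightarrow> (nat \<Rightarrow> nat) \<Rightarrow> (nat \<Rightarrow> nat \<Rightarrow> nat set) \<Rightarrow> (nat \<Rightarrow> real) \<Rightarrow> bool" where
  "max_demand_vector k n t R dem \<longleftrightarrow> dem \<in> service_rate_region k n t R \<and>
     (\<forall>\<mu>\<in>service_rate_region k n t R. (\<Sum>i<k. \<mu> i) \<le> (\<Sum>i<k. dem i))"

text \<open>Graph representation: vertices are servers and dummy vertices d_{i,j};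
  the edge (i,j) has endpoint set ends R i j.\<close>
datatype vertex = Server nat | Dummy nat nat

definition ends :: "(nat \<Rightarrow> nat \<Rightarrow> nat set) \<Rightarrow> nat \<Rightarrow> nat \<Rightarrow> vertex set" where
  "ends R i j = (if card (R i j) = 1 then Server ` R i j \<union> {Dummy i j} else Server ` R i j)"

definition graph_vertices :: "nat \<Rightarrow> nat \<Rightarrow> (nat \<Rightarrow> nat) \<Rightarrow> (nat \<Rightarrow> nat \<Rightarrow> nat set) \<Rightarrow> vertex set" where
  "graph_vertices k n t R = Server ` {..<n} \<union>
     {Dummy i j | i j. (i, j) \<in> rec_idx k t \<and> card (R i j) = 1}"

definition fractional_matching ::
  "nat \<Rightarrow> nat \<Rightarrow> (nat \<Rightarrow> nat) \<Rightarrow> (nat \<Rightarrow> nat \<Rightarrow> nat set) \<Rightarrow> (nat \<Rightarrow> nat \<Rightarrow> real) \<Rightarrow> bool" where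
  "fractional_matching k n t R x \<longleftrightarrow>
     (\<forall>(i, j)\<in>rec_idx k t. 0 \<le> x i j \<and> x i j \<le> 1) \<and>
     (\<forall>v\<in>graph_vertices k n t R.
        (\<Sum>(i, j)\<in>{(i, j)\<in>rec_idx k t. v \<in> ends R i j}. x i j) \<le> 1)"

definition max_fractional_matching ::
  "nat \<Rightarrow> nat \<Rightarrow> (nat \<Rightarrow> nat) \<Rightarrow> (nat \<Rightarrow> nat \<Rightarrow> nat set) \<Rightarrow> (nat \<Rightarrow> nat \<Rightarrow> real) \<Rightarrow> bool" where
  "max_fractional_matching k n t R x \<longleftrightarrow> fractional_matching k n t R x \<and>
     (\<forall>y. fractional_matching k n t R y \<longrightarrow>
        (\<Sum>(i, j)\<in>rec_idx k t. y i j) \<le> (\<Sum>(i, j)\<in>rec_idx k t. x i j))"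

end

theory Submission
  imports Defs
begin

lemma rec_idx_Sigma: "rec_idx k t = Sigma {..<k} (\<lambda>i. {..<t i})"
  by (auto simp: rec_idx_def)

lemma finite_rec_idx: "finite (rec_idx k t)"
  by (simp add: rec_idx_Sigma)

lemma sum_rec_idx: "(\<Sum>(i, j)\<in>rec_idx k t. f i j) = (\<Sum>i<k. \<Sum>j<t i. f i j)"
  by (simp add: rec_idx_Sigma sum.Sigma)

lemma server_set: "{(i, j)\<in>rec_idx k t. Server l \<in> ends R i j} = {(i, j)\<in>rec_idx k t. l \<in> R i j}"
  by (auto simp: ends_def)

lemma dummy_set: assumes "(a,b) \<in> rec_idx k t" "card (R a b) = 1"
  shows "{(i, j)\<in>rec_idx k t. Dummy a b \<in> ends R i j} = {(a,b)}"
  using assms by (auto simp: ends_def split: if_splits)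

lemma fm_iff:
  assumes A: "\<forall>(i,j)\<in>rec_idx k t. R i j \<subseteq> {..<n} \<and> R i j \<noteq> {}"
  shows "fractional_matching k n t R x \<longleftrightarrow>
    ((\<forall>(i, j)\<in>rec_idx k t. x i j \<ge> 0) \<and>
     (\<forall>l<n. (\<Sum>(i, j)\<in>{(i, j)\<in>rec_idx k t. l \<in> R i j}. x i j) \<le> 1))"
proof
  assume F: "fractional_matching k n t R x"
  show "(\<forall>(i, j)\<in>rec_idx k t. x i j \<ge> 0) \<and>
     (\<forall>l<n. (\<Sum>(i, j)\<in>{(i, j)\<in>rec_idx k t. l \<in> R i j}. x i j) \<le> 1)"
  proof (intro conjI allI impI)
    show "\<forall>(i, j)\<in>rec_idx k t. x i j \<ge> 0" using F by (auto simp: fractional_matching_def)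
  next
    fix l assume "l < n"
    then have "Server l \<in> graph_vertices k n t R" by (simp add: graph_vertices_def)
    with F have "(\<Sum>(i, j)\<in>{(i, j)\<in>rec_idx k t. Server l \<in> ends R i j}. x i j) \<le> 1"
      unfolding fractional_matching_def by blast
    then show "(\<Sum>(i, j)\<in>{(i, j)\<in>rec_idx k t. l \<in> R i j}. x i j) \<le> 1"
      by (simp only: server_set)
  qed
next
  assume B: "(\<forall>(i, j)\<in>rec_idx k t. x i j \<ge> 0) \<and>
     (\<forall>l<n. (\<Sum>(i, j)\<in>{(i, j)\<in>rec_idx k t. l \<in> R i j}. x i j) \<le> 1)"
  have le1: "x i j \<le> 1" if ij: "(i,j) \<in> rec_idx k t" for i j
  proof -
    obtain l where l: "l \<in> R i j" "l < n" using A ij by fastforce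
    have fin: "finite {(i, j)\<in>rec_idx k t. l \<in> R i j}"
      using finite_rec_idx by (rule finite_subset[rotated]) auto
    have "x i j \<le> (\<Sum>(i, j)\<in>{(i, j)\<in>rec_idx k t. l \<in> R i j}. x i j)"
      using member_le_sum[OF _ _ fin, of "(i,j)" "\<lambda>(i,j). x i j"] B ij l by auto
    also have "\<dots> \<le> 1" using B l by blast
    finally show ?thesis .
  qed
  show "fractional_matching k n t R x"
    unfolding fractional_matching_def
  proof (rule conjI)
    show "\<forall>(i, j)\<in>rec_idx k t. 0 \<le> x i j \<and> x i j \<le> 1" using B le1 by auto
  next
    show "\<forall>v\<in>graph_vertices k n t R.
        (\<Sum>(i, j)\<in>{(i, j)\<in>rec_idx k t. v \<in> ends R i j}. x i j) \<le> 1"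
    proof
    fix v assume v: "v \<in> graph_vertices k n t R"
    show "(\<Sum>(i, j)\<in>{(i, j)\<in>rec_idx k t. v \<in> ends R i j}. x i j) \<le> 1"
    proof (cases v)
      case (Server l)
      then have "l < n" using v by (auto simp: graph_vertices_def)
      then show ?thesis using B Server server_set by simp
    next
      case (Dummy a b)
      then have "(a,b) \<in> rec_idx k t" "card (R a b) = 1" using v by (auto simp: graph_vertices_def)
      then show ?thesis using Dummy le1 by (simp add: dummy_set)
    qed
    qed
  qed
qed

theorem corollary1:
  fixes G :: "nat \<Rightarrow> nat \<Rightarrow> 'a::{finite, field}"
    and k n :: nat
    and t :: "nat \<Rightarrow> nat"
    and R :: "nat \<Rightarrow> nat \<Rightarrow> nat set"
  assumes "generator_matrix k n G"
    and "\<And>i. i < k \<Longrightarrow> t i \<ge> 1"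
    and "\<And>i j. i < k \<Longrightarrow> j < t i \<Longrightarrow> is_recovery_set k n G i (R i j)"
    and "\<And>i j. i < k \<Longrightarrow> j < t i \<Longrightarrow> card (R i j) = 1 \<or> card (R i j) = 2"
  shows "(\<forall>x. max_fractional_matching k n t R x \<longrightarrow>
            max_demand_vector k n t R (\<lambda>i. \<Sum>j<t i. x i j))
       \<and> (\<forall>dem. max_demand_vector k n t R dem \<longrightarrow>
            (\<exists>x. max_fractional_matching k n t R x \<and>
                 (\<forall>i<k. dem i = (\<Sum>j<t i. x i j))))"
proof -
  have A: "\<forall>(i,j)\<in>rec_idx k t. R i j \<subseteq> {..<n} \<and> R i j \<noteq> {}"
  proof (clarify)
    fix i j assume "(i,j) \<in> rec_idx k t"
    then have ij: "i < k" "j < t i" by (auto simp: rec_idx_def)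
    have "R i j \<subseteq> {..<n}" using assms(3)[OF ij] by (simp add: is_recovery_set_def)
    moreover have "R i j \<noteq> {}" using assms(4)[OF ij] by auto
    ultimately show "R i j \<subseteq> {..<n} \<and> R i j \<noteq> {}" by blast
  qed
  note fm = fm_iff[OF A]
  have inS: "dem \<in> service_rate_region k n t R \<longleftrightarrow>
     (\<exists>lam. fractional_matching k n t R lam \<and> (\<forall>i<k. (\<Sum>j<t i. lam i j) = dem i))" for dem
    unfolding service_rate_region_def fm by auto
  show ?thesis
  proof (intro conjI allI impI)
    fix x assume M: "max_fractional_matching k n t R x"
    show "max_demand_vector k n t R (\<lambda>i. \<Sum>j<t i. x i j)"
      unfolding max_demand_vector_def
    proof (intro conjI ballI)
      show "(\<lambda>i. \<Sum>j<t i. x i j) \<in> service_rate_region k n t R"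
        using M inS by (auto simp: max_fractional_matching_def)
    next
      fix \<mu> assume "\<mu> \<in> service_rate_region k n t R"
      then obtain lam where L: "fractional_matching k n t R lam" "\<forall>i<k. (\<Sum>j<t i. lam i j) = \<mu> i"
        using inS by blast
      have "(\<Sum>i<k. \<mu> i) = (\<Sum>i<k. \<Sum>j<t i. lam i j)" using L(2) by simp
      also have "\<dots> = (\<Sum>(i, j)\<in>rec_idx k t. lam i j)" by (simp add: sum_rec_idx)
      also have "\<dots> \<le> (\<Sum>(i, j)\<in>rec_idx k t. x i j)"
        using M L(1) by (auto simp: max_fractional_matching_def)
      also have "\<dots> = (\<Sum>i<k. \<Sum>j<t i. x i j)" by (simp add: sum_rec_idx)
      finally show "(\<Sum>i<k. \<mu> i) \<le> (\<Sum>i<k. \<Sum>j<t i. x i j)" .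
    qed
  next
    fix dem assume D: "max_demand_vector k n t R dem"
    then obtain lam where L: "fractional_matching k n t R lam" "\<forall>i<k. (\<Sum>j<t i. lam i j) = dem i"
      using inS by (auto simp: max_demand_vector_def)
    have "max_fractional_matching k n t R lam"
      unfolding max_fractional_matching_def
    proof (intro conjI allI impI)
      show "fractional_matching k n t R lam" by fact
    next
      fix y assume Y: "fractional_matching k n t R y"
      then have "(\<lambda>i. \<Sum>j<t i. y i j) \<in> service_rate_region k n t R" using inS by blast
      then have "(\<Sum>i<k. \<Sum>j<t i. y i j) \<le> (\<Sum>i<k. dem i)"
        using D by (auto simp: max_demand_vector_def)
      also have "\<dots> = (\<Sum>i<k. \<Sum>j<t i. lam i j)" using L(2) by simp
      finally show "(\<Sum>(i, j)\<in>rec_idx k t. y i j) \<le> (\<Sum>(i, j)\<in>rec_idx k t. lam i j)"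
        by (simp add: sum_rec_idx)
    qed
    then show "\<exists>x. max_fractional_matching k n t R x \<and> (\<forall>i<k. dem i = (\<Sum>j<t i. x i j))"
      using L(2) by auto
  qed
qed

end
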